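(* With the reduced expression $t(\lambda_-)=u\,s_{\ell_1}\cdots s_{\ell_L}$ and roots $\tilde\beta_k$ as in the context, for every $1\le k\le M$ one has $w_\circ\overline{\tilde\beta_k}=\beta_k^\vee$, where $\beta_k=s_{i_N}\cdots s_{i_{k+1}}\alpha_{i_k}$.
   Context: Setting: $\mathfrak g$ finite-dimensional simple Lie algebra, simple roots $\{\alpha_i\}_{i\in I}$, simple coroots $\{\alpha_i^\vee\}$, roots $\Delta=\Delta^+\sqcup\Delta^-$, weights $P$, dominant weights $P^+$, Weyl group $W$, longest element $w_\circ$. For $\lambda\in P^+$: $S=\{i:\langle\lambda,\alpha_i^\vee\rangle=0\}$, $W_S=\langle s_i:i\in S\rangle$ with longest element $w_\circ^S$, $\Delta^+_S$ the positive roots in $\sum_{i\in S}\mathbb Z\alpha_i$; $\lambda_-=w_\circ\lambda$; $v(\lambda_-)$ the minimal-length element of $\{x\in W: x\lambda=\lambda_-\}$, so $w_\circ=v(\lambda_-)w_\circ^S$ with lengths adding. Fix reduced expressions $v(\lambda_-)=s_{i_1}\cdots s_{i_M}$ and $w_\circ^S=s_{i_{M+1}}\cdots s_{i_N}$, so $w_\circ=s_{i_1}\cdots s_{i_N}$ is reduced; put $\beta_j=s_{i_N}\cdots s_{i_{j+1}}\alpha_{i_j}$; then $\Delta^+\setminus\Delta^+_S=\{\beta_1,\dots,\beta_M\}$, and the total order $\prec$ on $\Delta^+$ is $\beta_1\succ\beta_2\succ\dots\succ\beta_N$. Affine: real roots of the untwisted affinization of the dual root system $\widetilde\Delta_{\rm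 aff}=\{\alpha^\vee+a\tilde\delta\}$, positive ones $\widetilde\Delta^+_{\rm aff}$ ($a>0$, or $a=0,\alpha\in\Delta^+$), $\widetilde\Delta^-_{\rm aff}=-\widetilde\Delta^+_{\rm aff}$; simple roots $\alpha_i^\vee$ ($i\in I$), $\alpha_0^\vee=\tilde\delta-\varphi^\vee$ ($\varphi$ highest short root), $I_{\rm aff}=I\sqcup\{0\}$; $\beta=\bar\beta+\deg(\beta)\tilde\delta$ with $\bar\beta\in\mathfrak h$. $W_{\rm ext}=t(P)\rtimes W$ acting by $v\,t(\nu)(\bar\beta+r\tilde\delta)=v\bar\beta+(r-\langle\nu,\bar\beta\rangle)\tilde\delta$; $\ell(x)=\#(\widetilde\Delta^+_{\rm aff}\cap x^{-1}\widetilde\Delta^-_{\rm aff})$; $\Omega$ the length-zero elements. The map $\Phi:\widetilde\Delta^+_{\rm aff}\cap t(\lambda_-)^{-1}\widetilde\Delta^-_{\rm aff}\to\mathbb Q_{\ge0}\times(\Delta^+\setminus\Delta^+_S)$, $\Phi(\beta)=\Big(\frac{\langle\lambda_-,\bar\beta\rangle-\deg(\beta)}{\langle\lambda_-,\bar\beta\rangle},\,w_\circ(\bar\beta)^\vee\Big)$ (where $(\alpha^\vee)^\vee=\alpha$) is injective. Order the target lexicographically: $(a,\alpha)<(b,\beta)$ iff $a<b$, or $a=b$ and $\alpha\succ\beta$; $\prec'$ is the pullback order. The reduced expression $t(\lambda_-)=u\,s_{\ell_1}\cdots s_{\ell_L}$ ($u\in\Omega$, $\ell_k\in I_{\rm aff}$)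 is the unique one with $\tilde\beta_j:=s_{\ell_L}\cdots s_{\ell_{j+1}}\alpha^\vee_{\ell_j}$ satisfying $\tilde\beta_1\prec'\dots\prec'\tilde\beta_L$ exhausting $\widetilde\Delta^+_{\rm aff}\cap t(\lambda_-)^{-1}\widetilde\Delta^-_{\rm aff}$. *)

theory Defs
  imports "HOL-Analysis.Analysis"
begin

text \<open>Coroot of a vector: x^vee = 2x/(x,x); note (a^vee)^vee = a.
  The pairing of a weight with a coroot is the inner product.\<close>
definition coroot :: "'a::real_inner \<Rightarrow> 'a" where
  "coroot x = (2 / (x \<bullet> x)) *\<^sub>R x"

definition refl :: "'a::real_inner \<Rightarrow> 'a \<Rightarrow> 'a" where
  "refl a x = x - (x \<bullet> coroot a) *\<^sub>R a"

definition root_system :: "'a::euclidean_space set \<Rightarrow> bool" where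
  "root_system R \<longleftrightarrow> finite R \<and> R \<noteq> {} \<and> 0 \<notin> R \<and> span R = UNIV \<and>
     (\<forall>a\<in>R. \<forall>b\<in>R. refl a b \<in> R) \<and>
     (\<forall>a\<in>R. \<forall>b\<in>R. b \<bullet> coroot a \<in> \<int>) \<and>
     (\<forall>a\<in>R. \<forall>c. c *\<^sub>R a \<in> R \<longrightarrow> c = 1 \<or> c = -1)"

definition irreducible_rs :: "'a::euclidean_space set \<Rightarrow> bool" where
  "irreducible_rs R \<longleftrightarrow> \<not> (\<exists>A B. A \<noteq> {} \<and> B \<noteq> {} \<and> A \<union> B = R \<and>
                              (\<forall>a\<in>A. \<forall>b\<in>B. a \<bullet> b = 0))"

definition nonneg_comb :: "'i set \<Rightarrow> ('i \<Rightarrow> 'a::real_vector) \<Rightarrow> 'a \<Rightarrow> bool" where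
  "nonneg_comb I al x \<longleftrightarrow>
     (\<exists>c::'i \<Rightarrow> int. (\<forall>i\<in>I. c i \<ge> 0) \<and> x = (\<Sum>i\<in>I. of_int (c i) *\<^sub>R al i))"

definition is_base :: "'a::euclidean_space set \<Rightarrow> 'i set \<Rightarrow> ('i \<Rightarrow> 'a) \<Rightarrow> bool" where
  "is_base R I al \<longleftrightarrow> finite I \<and> inj_on al I \<and> al ` I \<subseteq> R \<and> independent (al ` I) \<and>
     (\<forall>b\<in>R. nonneg_comb I al b \<or> nonneg_comb I al (- b))"

definition pos_roots :: "'a::euclidean_space set \<Rightarrow> 'i set \<Rightarrow> ('i \<Rightarrow> 'a) \<Rightarrow> 'a set" where
  "pos_roots R I al = {b \<in> R. nonneg_comb I al b}"

definition wprod :: "('i \<Rightarrow> 'a::real_inner) \<Rightarrow> 'i list \<Rightarrow> 'a \<Rightarrow> 'a" where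
  "wprod al ws = foldr (\<lambda>i f. refl (al i) \<circ> f) ws id"

definition weyl :: "'i set \<Rightarrow> ('i \<Rightarrow> 'a::real_inner) \<Rightarrow> ('a \<Rightarrow> 'a) set" where
  "weyl J al = {wprod al ws | ws. set ws \<subseteq> J}"

definition wlen :: "'i set \<Rightarrow> ('i \<Rightarrow> 'a::real_inner) \<Rightarrow> ('a \<Rightarrow> 'a) \<Rightarrow> nat" where
  "wlen J al w = (LEAST n. \<exists>ws. set ws \<subseteq> J \<and> length ws = n \<and> wprod al ws = w)"

definition reduced_expr :: "'i set \<Rightarrow> ('i \<Rightarrow> 'a::real_inner) \<Rightarrow> 'i list \<Rightarrow> ('a \<Rightarrow> 'a) \<Rightarrow> bool" where
  "reduced_expr J al ws w \<longleftrightarrow> set ws \<subseteq> J \<and> wprod al ws = w \<and> length ws = wlen J al w"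

definition longest :: "'i set \<Rightarrow> ('i \<Rightarrow> 'a::real_inner) \<Rightarrow> 'a \<Rightarrow> 'a" where
  "longest J al = (THE w. w \<in> weyl J al \<and> (\<forall>x\<in>weyl J al. wlen J al x \<le> wlen J al w))"

definition weights :: "'i set \<Rightarrow> ('i \<Rightarrow> 'a::real_inner) \<Rightarrow> 'a set" where
  "weights I al = {x. \<forall>i\<in>I. x \<bullet> coroot (al i) \<in> \<int>}"

definition dominant :: "'i set \<Rightarrow> ('i \<Rightarrow> 'a::real_inner) \<Rightarrow> 'a set" where
  "dominant I al = {x \<in> weights I al. \<forall>i\<in>I. x \<bullet> coroot (al i) \<ge> 0}"

definition stab_set :: "'i set \<Rightarrow> ('i \<Rightarrow> 'a::real_inner) \<Rightarrow> 'a \<Rightarrow> 'i set" where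
  "stab_set I al lam = {i \<in> I. lam \<bullet> coroot (al i) = 0}"

definition min_rep :: "'i set \<Rightarrow> ('i \<Rightarrow> 'a::real_inner) \<Rightarrow> 'a \<Rightarrow> 'a \<Rightarrow> 'a \<Rightarrow> 'a" where
  "min_rep I al lam mu = (THE x. x \<in> weyl I al \<and> x lam = mu \<and>
      (\<forall>y\<in>weyl I al. y lam = mu \<longrightarrow> wlen I al x \<le> wlen I al y))"

text \<open>beta_k = s_{i_N} ... s_{i_{k+1}} alpha_{i_k}  (k is 1-based; is = [i_1,...,i_N]).\<close>
definition beta_root :: "('i \<Rightarrow> 'a::real_inner) \<Rightarrow> 'i list \<Rightarrow> nat \<Rightarrow> 'a" where
  "beta_root al is k = wprod al (rev (drop k is)) (al (is ! (k - 1)))"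

definition succ_ord :: "('i \<Rightarrow> 'a::real_inner) \<Rightarrow> 'i list \<Rightarrow> 'a \<Rightarrow> 'a \<Rightarrow> bool" where
  "succ_ord al is a b \<longleftrightarrow> (\<exists>j k. 1 \<le> j \<and> j < k \<and> k \<le> length is \<and>
       beta_root al is j = a \<and> beta_root al is k = b)"

definition highest_short_root :: "'a::euclidean_space set \<Rightarrow> 'i set \<Rightarrow> ('i \<Rightarrow> 'a) \<Rightarrow> 'a" where
  "highest_short_root R I al = (THE p. p \<in> R \<and> (\<forall>g\<in>R. p \<bullet> p \<le> g \<bullet> g) \<and>
      (\<forall>g\<in>R. g \<bullet> g = p \<bullet> p \<longrightarrow> nonneg_comb I al (p - g)))"

text \<open>An element bar(beta) + r tilde(delta) is represented by the pair (bar(beta), r).\<close>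
definition aff_roots :: "'a::euclidean_space set \<Rightarrow> ('a \<times> real) set" where
  "aff_roots R = {(coroot a, of_int n) | a n. a \<in> R}"

definition aff_pos :: "'a::euclidean_space set \<Rightarrow> 'i set \<Rightarrow> ('i \<Rightarrow> 'a) \<Rightarrow> ('a \<times> real) set" where
  "aff_pos R I al = {(coroot a, of_int n) | a n. a \<in> R \<and>
                      (n > 0 \<or> (n = 0 \<and> a \<in> pos_roots R I al))}"

definition aff_neg :: "'a::euclidean_space set \<Rightarrow> 'i set \<Rightarrow> ('i \<Rightarrow> 'a) \<Rightarrow> ('a \<times> real) set" where
  "aff_neg R I al = {(- b, - r) | b r. (b, r) \<in> aff_pos R I al}"

text \<open>Action of v t(nu): bar(beta) + r delta  |->  v bar(beta) + (r - <nu, bar(beta)>) delta.\<close>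
definition ext_act :: "('a::real_inner \<Rightarrow> 'a) \<Rightarrow> 'a \<Rightarrow> 'a \<times> real \<Rightarrow> 'a \<times> real" where
  "ext_act v nu x = (v (fst x), snd x - nu \<bullet> fst x)"

definition W_ext :: "'i set \<Rightarrow> ('i \<Rightarrow> 'a::real_inner) \<Rightarrow> ('a \<times> real \<Rightarrow> 'a \<times> real) set" where
  "W_ext I al = {ext_act v nu | v nu. v \<in> weyl I al \<and> nu \<in> weights I al}"

definition aff_len :: "'a::euclidean_space set \<Rightarrow> 'i set \<Rightarrow> ('i \<Rightarrow> 'a)
                        \<Rightarrow> ('a \<times> real \<Rightarrow> 'a \<times> real) \<Rightarrow> nat" where
  "aff_len R I al x = card {b \<in> aff_pos R I al. x b \<in> aff_neg R I al}"

definition Omega :: "'a::euclidean_space set \<Rightarrow> 'i set \<Rightarrow> ('i \<Rightarrow> 'a)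
                        \<Rightarrow> ('a \<times> real \<Rightarrow> 'a \<times> real) set" where
  "Omega R I al = {x \<in> W_ext I al. aff_len R I al x = 0}"

text \<open>Affine simple roots: Some i |-> alpha_i^vee, None (the node 0) |-> tilde(delta) - phi^vee.\<close>
definition aff_simple :: "('i \<Rightarrow> 'a::real_inner) \<Rightarrow> 'a \<Rightarrow> 'i option \<Rightarrow> 'a \<times> real" where
  "aff_simple al phi j = (case j of Some i \<Rightarrow> (coroot (al i), 0) | None \<Rightarrow> (- coroot phi, 1))"

definition aff_refl :: "'a::real_inner \<times> real \<Rightarrow> 'a \<times> real \<Rightarrow> 'a \<times> real" where
  "aff_refl b x = (fst x - (fst x \<bullet> coroot (fst b)) *\<^sub>R fst b,
                   snd x - (fst x \<bullet> coroot (fst b)) * snd b)"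

definition aprod :: "('i \<Rightarrow> 'a::real_inner) \<Rightarrow> 'a \<Rightarrow> 'i option list \<Rightarrow> 'a \<times> real \<Rightarrow> 'a \<times> real" where
  "aprod al phi ls = foldr (\<lambda>j f. aff_refl (aff_simple al phi j) \<circ> f) ls id"

text \<open>tilde(beta)_j = s_{l_L} ... s_{l_{j+1}} alpha^vee_{l_j}  (j 1-based).\<close>
definition tbeta :: "('i \<Rightarrow> 'a::real_inner) \<Rightarrow> 'a \<Rightarrow> 'i option list \<Rightarrow> nat \<Rightarrow> 'a \<times> real" where
  "tbeta al phi ls j = aprod al phi (rev (drop j ls)) (aff_simple al phi (ls ! (j - 1)))"

definition Phi :: "'a::real_inner \<Rightarrow> ('a \<Rightarrow> 'a) \<Rightarrow> 'a \<times> real \<Rightarrow> real \<times> 'a" where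
  "Phi lamm w0 b = ((lamm \<bullet> fst b - snd b) / (lamm \<bullet> fst b), coroot (w0 (fst b)))"

definition prec' :: "('i \<Rightarrow> 'a::real_inner) \<Rightarrow> 'i list \<Rightarrow> 'a \<Rightarrow> ('a \<Rightarrow> 'a)
                       \<Rightarrow> 'a \<times> real \<Rightarrow> 'a \<times> real \<Rightarrow> bool" where
  "prec' al is lamm w0 x y \<longleftrightarrow>
     fst (Phi lamm w0 x) < fst (Phi lamm w0 y) \<or>
     (fst (Phi lamm w0 x) = fst (Phi lamm w0 y) \<and>
      succ_ord al is (snd (Phi lamm w0 x)) (snd (Phi lamm w0 y)))"

end

theory Submission
  imports Defs
begin


lemma coroot_coroot[simp]: "coroot (coroot x) = (x::'a::real_inner)"
proof (cases "x = 0")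
  case True then show ?thesis by (simp add: coroot_def)
next
  case False
  then have "x \<bullet> x \<noteq> 0" by simp
  then show ?thesis unfolding coroot_def by (simp add: field_simps)
qed

lemma coroot_neg[simp]: "coroot (- x) = - coroot (x::'a::real_inner)"
  by (simp add: coroot_def)

lemma coroot_inj: "coroot x = coroot y \<Longrightarrow> x = (y::'a::real_inner)"
  by (metis coroot_coroot)

lemma coroot_zero_iff[simp]: "coroot x = 0 \<longleftrightarrow> x = (0::'a::real_inner)"
  by (metis coroot_coroot coroot_def scaleR_zero_right)

lemma inner_coroot_self: "x \<noteq> 0 \<Longrightarrow> x \<bullet> coroot x = 2"
  by (simp add: coroot_def)

definition orth :: "('a::real_inner \<Rightarrow> 'a) \<Rightarrow> bool" where
  "orth w \<longleftrightarrow> linear w \<and> (\<forall>x y. w x \<bullet> w y = x \<bullet> y)"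

lemma orth_id: "orth id" by (simp add: orth_def linear_id)

lemma orth_comp: "orth f \<Longrightarrow> orth g \<Longrightarrow> orth (f \<circ> g)"
  by (auto simp: orth_def linear_compose)

lemma refl_linear: "linear (refl a)"
  unfolding refl_def by (auto intro!: linearI simp: inner_add_left algebra_simps)

lemma refl_orth: "orth (refl a)"
proof -
  have "refl a x \<bullet> refl a y = x \<bullet> y" for x y
  proof (cases "a = 0")
    case True then show ?thesis by (simp add: refl_def coroot_def)
  next
    case False
    then have "a \<bullet> a \<noteq> 0" by simp
    then show ?thesis unfolding refl_def coroot_def
      by (simp add: inner_diff_left inner_diff_right algebra_simps inner_commute)
  qed
  then show ?thesis using refl_linear by (simp add: orth_def)
qed

lemma refl_refl[simp]: "refl a (refl a x) = x"
proof (cases "a = 0")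
  case True then show ?thesis by (simp add: refl_def coroot_def)
next
  case False
  then have "a \<bullet> coroot a = 2" by (rule inner_coroot_self)
  then show ?thesis unfolding refl_def by (simp add: inner_diff_left algebra_simps)
qed

lemma refl_self[simp]: "a \<noteq> 0 \<Longrightarrow> refl a a = - a"
  by (simp add: refl_def inner_coroot_self scaleR_2)

lemma orth_linear: "orth w \<Longrightarrow> linear w" by (simp add: orth_def)
lemma orth_inner: "orth w \<Longrightarrow> w x \<bullet> w y = x \<bullet> y" by (simp add: orth_def)

lemma orth_coroot: "orth w \<Longrightarrow> w (coroot x) = coroot (w x)"
  unfolding coroot_def by (simp add: orth_inner linear_scale[OF orth_linear])

lemma orth_neg: "orth w \<Longrightarrow> w (- x) = - w x"
  by (simp add: linear_neg[OF orth_linear])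

lemma orth_inj: "orth w \<Longrightarrow> w x = w y \<Longrightarrow> x = y"
proof -
  assume o: "orth w" and e: "w x = w y"
  have "w (x - y) = 0" using e by (simp add: linear_diff[OF orth_linear[OF o]])
  then have "(x - y) \<bullet> (x - y) = 0" using orth_inner[OF o, of "x-y" "x-y"] by simp
  then show "x = y" by simp
qed

lemma orth_conj: "orth u \<Longrightarrow> u \<circ> refl a = refl (u a) \<circ> u"
proof
  fix x assume o: "orth u"
  show "(u \<circ> refl a) x = (refl (u a) \<circ> u) x"
    using o by (simp add: refl_def linear_diff[OF orth_linear[OF o]] linear_scale[OF orth_linear[OF o]]
        orth_coroot[symmetric] orth_inner)
qed

lemma wprod_Nil[simp]: "wprod al [] = id" by (simp add: wprod_def)
lemma wprod_Cons[simp]: "wprod al (i # ws) = refl (al i) \<circ> wprod al ws" by (simp add: wprod_def)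
lemma wprod_append: "wprod al (xs @ ys) = wprod al xs \<circ> wprod al ys"
  by (induction xs) (auto simp: o_assoc)
lemma wprod_snoc: "wprod al (xs @ [j]) = wprod al xs \<circ> refl (al j)"
  by (simp add: wprod_append)
lemma wprod_orth: "orth (wprod al ws)"
proof (induction ws)
  case Nil then show ?case by (simp only: wprod_Nil orth_id)
next
  case (Cons a ws) then show ?case using orth_comp[OF refl_orth Cons.IH] by (simp only: wprod_Cons)
qed
lemma wprod_rev_inv[simp]: "wprod al (rev ws) (wprod al ws x) = x"
  by (induction ws arbitrary: x) (auto simp: wprod_snoc)
lemma wprod_inv_rev[simp]: "wprod al ws (wprod al (rev ws) x) = x"
  using wprod_rev_inv[of al "rev ws"] by simp




locale RS =
  fixes R :: "'a::euclidean_space set" and I :: "'i set" and al :: "'i \<Rightarrow> 'a"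
  assumes rs: "root_system R" and base: "is_base R I al"
begin

abbreviation "P \<equiv> pos_roots R I al"
abbreviation "s i \<equiv> refl (al i)"

lemma finR: "finite R" using rs by (simp add: root_system_def)
lemma zero_notin: "0 \<notin> R" using rs by (simp add: root_system_def)
lemma refl_closed: "a \<in> R \<Longrightarrow> b \<in> R \<Longrightarrow> refl a b \<in> R" using rs by (simp add: root_system_def)
lemma integral: "a \<in> R \<Longrightarrow> b \<in> R \<Longrightarrow> b \<bullet> coroot a \<in> \<int>" using rs by (simp add: root_system_def)
lemma reduced: "a \<in> R \<Longrightarrow> c *\<^sub>R a \<in> R \<Longrightarrow> c = 1 \<or> c = -1" using rs by (simp add: root_system_def)
lemma finI: "finite I" using base by (simp add: is_base_def)
lemma injal: "inj_on al I" using base by (simp add: is_base_def)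
lemma alR: "i \<in> I \<Longrightarrow> al i \<in> R" using base by (auto simp: is_base_def)
lemma indep: "independent (al ` I)" using base by (simp add: is_base_def)
lemma posneg: "b \<in> R \<Longrightarrow> nonneg_comb I al b \<or> nonneg_comb I al (- b)" using base by (simp add: is_base_def)
lemma al_nz: "i \<in> I \<Longrightarrow> al i \<noteq> 0" using alR zero_notin by metis

lemma neg_R: "b \<in> R \<Longrightarrow> - b \<in> R"
  using refl_closed[of b b] zero_notin by (metis refl_self)

lemma coef_zero:
  assumes "(\<Sum>i\<in>I. x i *\<^sub>R al i) = 0" "i \<in> I" shows "x i = 0"
proof -
  define u where "u v = x (inv_into I al v)" for v
  have "(\<Sum>v\<in>al ` I. u v *\<^sub>R v) = (\<Sum>i\<in>I. u (al i) *\<^sub>R al i)"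
    by (rule sum.reindex[OF injal, unfolded comp_def])
  also have "\<dots> = (\<Sum>i\<in>I. x i *\<^sub>R al i)"
    by (rule sum.cong) (auto simp: u_def inv_into_f_f[OF injal])
  finally have "(\<Sum>v\<in>al ` I. u v *\<^sub>R v) = 0" using assms(1) by simp
  then have "u (al i) = 0"
    using independentD[OF indep] finI assms(2) by blast
  then show ?thesis by (simp add: u_def inv_into_f_f[OF injal assms(2)])
qed

lemma coef_eq:
  assumes "(\<Sum>i\<in>I. x i *\<^sub>R al i) = (\<Sum>i\<in>I. y i *\<^sub>R al i)" "i \<in> I" shows "x i = y i"
proof -
  have "(\<Sum>i\<in>I. (x i - y i) *\<^sub>R al i) = 0"
    using assms(1) by (simp add: scaleR_diff_left sum_subtractf)
  then show ?thesis using coef_zero[OF _ assms(2)] by fastforce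
qed

lemma nc_0: "nonneg_comb I al 0"
  unfolding nonneg_comb_def by (rule exI[of _ "\<lambda>_. 0"]) simp

lemma nc_add: assumes "nonneg_comb I al x" "nonneg_comb I al y" shows "nonneg_comb I al (x + y)"
proof -
  obtain c where c: "\<forall>i\<in>I. c i \<ge> 0" "x = (\<Sum>i\<in>I. of_int (c i) *\<^sub>R al i)"
    using assms(1) by (auto simp: nonneg_comb_def)
  obtain d where d: "\<forall>i\<in>I. d i \<ge> 0" "y = (\<Sum>i\<in>I. of_int (d i) *\<^sub>R al i)"
    using assms(2) by (auto simp: nonneg_comb_def)
  show ?thesis unfolding nonneg_comb_def
    by (rule exI[of _ "\<lambda>i. c i + d i"]) (simp add: c d sum.distrib scaleR_add_left)
qed

lemma nc_smult: assumes "nonneg_comb I al x" "(k::int) \<ge> 0" shows "nonneg_comb I al (of_int k *\<^sub>R x)"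
proof -
  obtain c where c: "\<forall>i\<in>I. c i \<ge> 0" "x = (\<Sum>i\<in>I. of_int (c i) *\<^sub>R al i)"
    using assms(1) by (auto simp: nonneg_comb_def)
  show ?thesis unfolding nonneg_comb_def
    by (rule exI[of _ "\<lambda>i. k * c i"]) (simp add: c assms(2) scaleR_sum_right)
qed

lemma nc_sum: "finite K \<Longrightarrow> (\<And>k. k \<in> K \<Longrightarrow> nonneg_comb I al (f k)) \<Longrightarrow> (\<And>k. k \<in> K \<Longrightarrow> c k \<ge> 0)
   \<Longrightarrow> nonneg_comb I al (\<Sum>k\<in>K. of_int (c k) *\<^sub>R f k)"
  by (induction K rule: finite_induct) (auto intro!: nc_add nc_smult simp: nc_0)

lemma nc_al: "i \<in> I \<Longrightarrow> nonneg_comb I al (al i)"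
  unfolding nonneg_comb_def
proof (rule exI[of _ "\<lambda>j. if j = i then 1 else 0"], intro conjI)
  assume i: "i \<in> I"
  have "(\<Sum>ia\<in>I. real_of_int (if ia = i then 1 else 0) *\<^sub>R al ia) = (\<Sum>ia\<in>I. if ia = i then al ia else 0)"
    by (rule sum.cong) auto
  also have "\<dots> = al i" using i finI by simp
  finally show "al i = (\<Sum>ia\<in>I. real_of_int (if ia = i then 1 else 0) *\<^sub>R al ia)" by simp
qed auto

lemma P_R: "a \<in> P \<Longrightarrow> a \<in> R" by (simp add: pos_roots_def)
lemma P_nc: "a \<in> P \<Longrightarrow> nonneg_comb I al a" by (simp add: pos_roots_def)
lemma finP: "finite P" using finR by (simp add: pos_roots_def)
lemma al_P: "i \<in> I \<Longrightarrow> al i \<in> P" by (simp add: pos_roots_def alR nc_al)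

lemma nc_nc_zero: assumes "nonneg_comb I al x" "nonneg_comb I al (- x)" shows "x = 0"
proof -
  obtain c where c: "\<forall>i\<in>I. c i \<ge> 0" "x = (\<Sum>i\<in>I. of_int (c i) *\<^sub>R al i)"
    using assms(1) by (auto simp: nonneg_comb_def)
  obtain d where d: "\<forall>i\<in>I. d i \<ge> 0" "- x = (\<Sum>i\<in>I. of_int (d i) *\<^sub>R al i)"
    using assms(2) by (auto simp: nonneg_comb_def)
  have "(\<Sum>i\<in>I. (of_int (c i + d i)::real) *\<^sub>R al i) = (\<Sum>i\<in>I. of_int (c i) *\<^sub>R al i) + (\<Sum>i\<in>I. of_int (d i) *\<^sub>R al i)"
    by (simp add: scaleR_add_left sum.distrib)
  also have "\<dots> = x + - x" by (metis c(2) d(2))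
  finally have "(\<Sum>i\<in>I. (of_int (c i + d i)::real) *\<^sub>R al i) = 0" by simp
  then have "\<forall>i\<in>I. (of_int (c i + d i)::real) = 0" using coef_zero[of "\<lambda>i. of_int (c i + d i)"] by blast
  then have "\<forall>i\<in>I. c i = 0" using c(1) d(1) by fastforce
  then show ?thesis using c(2) by simp
qed

lemma R_cases: "b \<in> R \<Longrightarrow> b \<in> P \<or> - b \<in> P"
  using posneg neg_R by (auto simp: pos_roots_def)

lemma P_not_neg: "a \<in> P \<Longrightarrow> - a \<notin> P"
  using nc_nc_zero zero_notin by (auto simp: pos_roots_def)

lemma simple_refl:
  assumes i: "i \<in> I" and a: "a \<in> P" and ne: "a \<noteq> al i"
  shows "s i a \<in> P"
proof -
  obtain c where c: "\<forall>j\<in>I. c j \<ge> 0" "a = (\<Sum>j\<in>I. of_int (c j) *\<^sub>R al j)"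
    using a by (auto simp: pos_roots_def nonneg_comb_def)
  have aR: "a \<in> R" using a P_R by blast
  obtain k where k: "a \<bullet> coroot (al i) = of_int k" using integral[OF alR[OF i] aR] Ints_cases by metis
  define c' where "c' j = c j - (if j = i then k else 0)" for j
  have sa: "s i a = (\<Sum>j\<in>I. of_int (c' j) *\<^sub>R al j)"
  proof -
    have "(\<Sum>j\<in>I. of_int (c' j) *\<^sub>R al j) = (\<Sum>j\<in>I. of_int (c j) *\<^sub>R al j) - (\<Sum>j\<in>I. (if j = i then of_int k *\<^sub>R al j else 0))"
      by (simp add: c'_def scaleR_diff_left sum_subtractf if_distrib[of "\<lambda>r. of_int r *\<^sub>R _"] cong: if_cong)
    also have "\<dots> = a - of_int k *\<^sub>R al i" using i finI c(2) by simp
    finally show ?thesis by (simp add: refl_def k)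
  qed
  have saR: "s i a \<in> R" using refl_closed[OF alR[OF i] aR] .
  show ?thesis
  proof (cases "\<exists>j\<in>I. j \<noteq> i \<and> c j > 0")
    case True
    then obtain j where j: "j \<in> I" "j \<noteq> i" "c j > 0" by blast
    show ?thesis
    proof (rule ccontr)
      assume "s i a \<notin> P"
      then have "- s i a \<in> P" using R_cases saR by blast
      then obtain d where d: "\<forall>j\<in>I. d j \<ge> 0" "- s i a = (\<Sum>j\<in>I. of_int (d j) *\<^sub>R al j)"
        by (auto simp: pos_roots_def nonneg_comb_def)
      have "(\<Sum>j\<in>I. (- of_int (d j)::real) *\<^sub>R al j) = - (\<Sum>j\<in>I. of_int (d j) *\<^sub>R al j)"
        by (simp add: sum_negf)
      also have "\<dots> = s i a" by (metis d(2) minus_minus)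
      finally have "(\<Sum>j\<in>I. (of_int (c' j)::real) *\<^sub>R al j) = (\<Sum>j\<in>I. (- of_int (d j)::real) *\<^sub>R al j)"
        using sa by simp
      then have "(of_int (c' j)::real) = - of_int (d j)" using coef_eq[of "\<lambda>j. of_int (c' j)" "\<lambda>j. - of_int (d j)"] j(1) by blast
      then have "c j = - d j" using j(2) by (simp add: c'_def)
      then show False using j d(1) by force
    qed
  next
    case False
    then have z: "\<forall>j\<in>I. j \<noteq> i \<longrightarrow> c j = 0" using c(1) by force
    have "a = (\<Sum>j\<in>I. (if j = i then of_int (c i) *\<^sub>R al i else 0))"
      unfolding c(2) by (rule sum.cong) (auto simp: z)
    then have ai: "a = of_int (c i) *\<^sub>R al i" using i finI by simp
    then have "of_int (c i) = (1::real) \<or> of_int (c i) = (-1::real)" using reduced[OF alR[OF i]] aR by metis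
    then have "c i = 1" using c(1) i by auto
    then show ?thesis using ai ne by simp
  qed
qed

end



context RS begin

definition Nset :: "('a \<Rightarrow> 'a) \<Rightarrow> 'a set" where
  "Nset w = {a \<in> P. - w a \<in> P}"

lemma finN: "finite (Nset w)" using finP by (simp add: Nset_def)

lemma wprod_R: "set ws \<subseteq> I \<Longrightarrow> a \<in> R \<Longrightarrow> wprod al ws a \<in> R"
  by (induction ws) (auto intro: refl_closed alR)

lemma N_step:
  assumes o: "orth w" and j: "j \<in> I" and p: "w (al j) \<in> P"
  shows "Nset (w \<circ> s j) = s j ` Nset w \<union> {al j}" "card (Nset (w \<circ> s j)) = Suc (card (Nset w))"
proof -
  have ajP: "al j \<in> P" using al_P[OF j] .
  show eq: "Nset (w \<circ> s j) = s j ` Nset w \<union> {al j}"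
  proof (intro equalityI subsetI)
    fix b assume b: "b \<in> Nset (w \<circ> s j)"
    show "b \<in> s j ` Nset w \<union> {al j}"
    proof (cases "b = al j")
      case False
      then have "s j b \<in> P" using simple_refl[OF j] b by (auto simp: Nset_def)
      then have "s j b \<in> Nset w" using b by (auto simp: Nset_def)
      then show ?thesis by (metis UnI1 image_eqI refl_refl)
    qed simp
  next
    fix b assume b: "b \<in> s j ` Nset w \<union> {al j}"
    show "b \<in> Nset (w \<circ> s j)"
    proof (cases "b = al j")
      case True
      then show ?thesis using ajP p al_nz[OF j] by (simp add: Nset_def orth_neg[OF o])
    next
      case False
      then obtain a where a: "a \<in> Nset w" "b = s j a" using b by auto
      have "a \<noteq> al j" using a(1) p P_not_neg by (auto simp: Nset_def)
      then have "s j a \<in> P" using simple_refl[OF j] a(1) by (auto simp: Nset_def)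
      then show ?thesis using a by (simp add: Nset_def)
    qed
  qed
  have nin: "al j \<notin> s j ` Nset w"
  proof
    assume "al j \<in> s j ` Nset w"
    then obtain a where "a \<in> Nset w" "al j = s j a" by auto
    then have "a = - al j" "a \<in> P" using al_nz[OF j] by (auto simp: Nset_def) (metis refl_refl refl_self)
    then show False using P_not_neg ajP by auto
  qed
  have inj: "inj_on (s j) (Nset w)" by (metis inj_onI refl_refl)
  show "card (Nset (w \<circ> s j)) = Suc (card (Nset w))"
    unfolding eq using nin finN card_image[OF inj] by (simp add: card_insert_if finN)
qed

lemma N_step_neg:
  assumes o: "orth w" and j: "j \<in> I" and p: "- w (al j) \<in> P"
  shows "card (Nset w) = Suc (card (Nset (w \<circ> s j)))"
proof -
  have o': "orth (w \<circ> s j)" using orth_comp[OF o refl_orth] .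
  have "(w \<circ> s j) (al j) \<in> P" using p al_nz[OF j] by (simp add: orth_neg[OF o])
  from N_step(2)[OF o' j this] show ?thesis by (simp add: comp_def)
qed

lemma card_N_le: "set ws \<subseteq> I \<Longrightarrow> card (Nset (wprod al ws)) \<le> length ws"
proof (induction ws rule: rev_induct)
  case Nil
  have "Nset (\<lambda>a. a) = {}" using P_not_neg by (auto simp: Nset_def)
  then show ?case by simp
next
  case (snoc j ws)
  then have j: "j \<in> I" and ws: "set ws \<subseteq> I" by auto
  let ?w = "wprod al ws"
  have o: "orth ?w" by (rule wprod_orth)
  have "?w (al j) \<in> R" using wprod_R[OF ws alR[OF j]] .
  then consider "?w (al j) \<in> P" | "- ?w (al j) \<in> P" using R_cases by blast
  then show ?case
  proof cases
    case 1 then show ?thesis using N_step(2)[OF o j 1] snoc.IH[OF ws] by (simp add: wprod_snoc comp_def)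
  next
    case 2 then show ?thesis using N_step_neg[OF o j 2] snoc.IH[OF ws] by (simp add: wprod_snoc comp_def)
  qed
qed

lemma deletion:
  assumes "set ws \<subseteq> I" "i \<in> I" "- wprod al ws (al i) \<in> P"
  shows "\<exists>ws'. set ws' \<subseteq> set ws \<and> Suc (length ws') = length ws \<and> wprod al ws' = wprod al ws \<circ> s i"
  using assms
proof (induction ws)
  case Nil then show ?case using al_P P_not_neg by fastforce
next
  case (Cons j ws)
  then have j: "j \<in> I" and ws: "set ws \<subseteq> I" by auto
  let ?g = "wprod al ws (al i)"
  have gR: "?g \<in> R" using wprod_R[OF ws alR[OF Cons.prems(2)]] .
  show ?case
  proof (cases "- ?g \<in> P")
    case True
    then obtain ws' where ws': "set ws' \<subseteq> set ws" "Suc (length ws') = length ws" "wprod al ws' = wprod al ws \<circ> s i"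
      using Cons.IH[OF ws Cons.prems(2)] by blast
    show ?thesis
      by (rule exI[of _ "j # ws'"]) (use ws' in \<open>auto simp: o_assoc\<close>)
  next
    case False
    then have gP: "?g \<in> P" using R_cases gR by blast
    have "- s j ?g \<in> P" using Cons.prems(3) by simp
    then have gj: "?g = al j" using simple_refl[OF j gP] P_not_neg by blast
    have c: "wprod al ws \<circ> s i = s j \<circ> wprod al ws"
    proof -
      have "wprod al ws \<circ> s i = refl ?g \<circ> wprod al ws" by (rule orth_conj[OF wprod_orth])
      then show ?thesis using gj by (simp only:)
    qed
    have eq: "wprod al (j # ws) \<circ> s i = wprod al ws"
    proof
      fix x
      have "(wprod al ws \<circ> s i) x = (s j \<circ> wprod al ws) x" using c by simp
      then show "(wprod al (j # ws) \<circ> s i) x = wprod al ws x" by (simp add: comp_def)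
    qed
    show ?thesis
    proof (rule exI[of _ ws], intro conjI)
      show "wprod al ws = wprod al (j # ws) \<circ> s i" by (rule eq[symmetric])
    qed auto
  qed
qed

lemma wlen_le: "set ws \<subseteq> J \<Longrightarrow> wlen J al (wprod al ws) \<le> length ws"
  unfolding wlen_def by (rule Least_le) blast

lemma wlen_ex: "w \<in> weyl J al \<Longrightarrow> \<exists>ws. set ws \<subseteq> J \<and> length ws = wlen J al w \<and> wprod al ws = w"
  unfolding wlen_def weyl_def by (rule LeastI_ex) blast

lemma card_N_reduced:
  assumes "J \<subseteq> I" "set ws \<subseteq> J" "length ws = wlen J al (wprod al ws)"
  shows "card (Nset (wprod al ws)) = length ws"
  using assms(2,3)
proof (induction ws rule: rev_induct)
  case Nil
  have "Nset (\<lambda>a. a) = {}" using P_not_neg by (auto simp: Nset_def)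
  then show ?case by simp
next
  case (snoc j ws)
  then have jJ: "j \<in> J" and ws: "set ws \<subseteq> J" by auto
  then have j: "j \<in> I" and wsI: "set ws \<subseteq> I" using assms(1) by auto
  let ?w = "wprod al ws"
  have red: "length ws = wlen J al ?w"
  proof (rule ccontr)
    assume "length ws \<noteq> wlen J al ?w"
    then have lt: "wlen J al ?w < length ws" using wlen_le[OF ws] by simp
    obtain ws2 where ws2: "set ws2 \<subseteq> J" "length ws2 = wlen J al ?w" "wprod al ws2 = ?w"
      using wlen_ex[of ?w J] ws unfolding weyl_def by blast
    have "wlen J al (wprod al (ws @ [j])) \<le> length (ws2 @ [j])"
      using wlen_le[of "ws2 @ [j]" J] ws2 jJ by (simp add: wprod_snoc comp_def)
    then show False using snoc.prems(2) lt ws2(2) by simp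
  qed
  have o: "orth ?w" by (rule wprod_orth)
  have "?w (al j) \<in> R" using wprod_R[OF wsI alR[OF j]] .
  then consider "?w (al j) \<in> P" | "- ?w (al j) \<in> P" using R_cases by blast
  then show ?case
  proof cases
    case 1 then show ?thesis using N_step(2)[OF o j 1] snoc.IH[OF ws red] by (simp add: wprod_snoc comp_def)
  next
    case 2
    obtain ws' where ws': "set ws' \<subseteq> set ws" "Suc (length ws') = length ws" "wprod al ws' = ?w \<circ> s j"
      using deletion[OF wsI j 2] by blast
    have "wlen J al (wprod al (ws @ [j])) \<le> length ws'"
      using wlen_le[of ws' J] ws'(1,3) ws by (simp add: wprod_snoc comp_def)
    then show ?thesis using snoc.prems(2) ws'(2) by simp
  qed
qed

lemma wlen_card: "J \<subseteq> I \<Longrightarrow> w \<in> weyl J al \<Longrightarrow> wlen J al w = card (Nset w)"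
  using wlen_ex[of w J] card_N_reduced[of J] by metis

lemma weyl_wprod: "set ws \<subseteq> J \<Longrightarrow> wprod al ws \<in> weyl J al"
  by (auto simp: weyl_def)

lemma weyl_cases: "w \<in> weyl J al \<Longrightarrow> (\<And>ws. set ws \<subseteq> J \<Longrightarrow> w = wprod al ws \<Longrightarrow> Q) \<Longrightarrow> Q"
  by (auto simp: weyl_def)

lemma weyl_comp: "v \<in> weyl J al \<Longrightarrow> w \<in> weyl J al \<Longrightarrow> v \<circ> w \<in> weyl J al"
proof -
  assume "v \<in> weyl J al" "w \<in> weyl J al"
  then obtain xs ys where "set xs \<subseteq> J" "v = wprod al xs" "set ys \<subseteq> J" "w = wprod al ys"
    by (auto simp: weyl_def)
  then show ?thesis using weyl_wprod[of "xs @ ys" J] by (simp add: wprod_append)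
qed

lemma weyl_refl: "j \<in> J \<Longrightarrow> w \<in> weyl J al \<Longrightarrow> w \<circ> s j \<in> weyl J al"
  using weyl_comp[of w J "s j"] weyl_wprod[of "[j]" J] by simp

lemma weyl_orth: "w \<in> weyl J al \<Longrightarrow> orth w"
  by (auto simp: weyl_def wprod_orth)

lemma weyl_mono: "J \<subseteq> K \<Longrightarrow> w \<in> weyl J al \<Longrightarrow> w \<in> weyl K al"
  by (auto simp: weyl_def)

lemma weyl_R: "J \<subseteq> I \<Longrightarrow> w \<in> weyl J al \<Longrightarrow> a \<in> R \<Longrightarrow> w a \<in> R"
  by (auto simp: weyl_def intro!: wprod_R)

lemma weyl_inv: "w \<in> weyl J al \<Longrightarrow> \<exists>v\<in>weyl J al. (\<forall>x. v (w x) = x \<and> w (v x) = x)"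
proof -
  assume "w \<in> weyl J al"
  then obtain ws where "set ws \<subseteq> J" "w = wprod al ws" by (auto simp: weyl_def)
  moreover have "wprod al (rev ws) \<in> weyl J al" using weyl_wprod[of "rev ws" J] calculation by simp
  ultimately show ?thesis by (intro bexI[of _ "wprod al (rev ws)"]) auto
qed

lemma N_empty_id:
  assumes "w \<in> weyl I al" "Nset w = {}" shows "w = id"
proof -
  have "wlen I al w = 0" using wlen_card[OF order_refl assms(1)] assms(2) by simp
  then show ?thesis using wlen_ex[OF assms(1)] by auto
qed

end



context RS begin

definition PJ :: "'i set \<Rightarrow> 'a set" where
  "PJ J = {a \<in> P. a \<in> span (al ` J)}"

lemma finPJ: "finite (PJ J)" using finP by (simp add: PJ_def)

lemma span_refl_iff: "j \<in> J \<Longrightarrow> s j x \<in> span (al ` J) \<longleftrightarrow> x \<in> span (al ` J)"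
proof -
  assume j: "j \<in> J"
  have aj: "al j \<in> span (al ` J)" using j by (simp add: span_base)
  have "s j x = x - (x \<bullet> coroot (al j)) *\<^sub>R al j" by (simp add: refl_def)
  then show ?thesis using aj span_diff span_scale span_add
    by (metis diff_add_cancel)
qed

lemma span_weyl_iff: "w \<in> weyl J al \<Longrightarrow> w x \<in> span (al ` J) \<longleftrightarrow> x \<in> span (al ` J)"
proof -
  assume "w \<in> weyl J al"
  then obtain ws where ws: "set ws \<subseteq> J" "w = wprod al ws" by (auto simp: weyl_def)
  have "wprod al ws x \<in> span (al ` J) \<longleftrightarrow> x \<in> span (al ` J)" using ws(1)
    by (induction ws arbitrary: x) (auto simp: span_refl_iff)
  then show ?thesis using ws by simp
qed

lemma nonJ_pos:
  assumes J: "J \<subseteq> I" and w: "w \<in> weyl J al" and a: "a \<in> P" "a \<notin> span (al ` J)"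
  shows "w a \<in> P"
proof -
  obtain ws where ws: "set ws \<subseteq> J" "w = wprod al ws" using w by (auto simp: weyl_def)
  have "wprod al ws a \<in> P \<and> wprod al ws a \<notin> span (al ` J)" using ws(1)
  proof (induction ws)
    case Nil then show ?case using a by simp
  next
    case (Cons j ws)
    then have j: "j \<in> J" and IH: "wprod al ws a \<in> P \<and> wprod al ws a \<notin> span (al ` J)" by auto
    have "wprod al ws a \<noteq> al j" using IH j by (auto simp: span_base)
    then have "s j (wprod al ws a) \<in> P" using simple_refl[of j] j J IH by auto
    then show ?case using IH span_refl_iff[OF j] by simp
  qed
  then show ?thesis using ws by simp
qed

lemma PJ_comb:
  assumes J: "J \<subseteq> I" and a: "a \<in> PJ J"
  shows "\<exists>c. (\<forall>j\<in>J. c j \<ge> (0::int)) \<and> a = (\<Sum>j\<in>J. of_int (c j) *\<^sub>R al j)"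
proof -
  obtain c where c: "\<forall>i\<in>I. c i \<ge> 0" "a = (\<Sum>i\<in>I. of_int (c i) *\<^sub>R al i)"
    using a by (auto simp: PJ_def pos_roots_def nonneg_comb_def)
  have finJ: "finite J" using finI J finite_subset by blast
  have "a \<in> span (al ` J)" using a by (simp add: PJ_def)
  then obtain u where u: "a = (\<Sum>v\<in>al ` J. u v *\<^sub>R v)"
    using span_finite[of "al ` J"] finJ by auto
  have injJ: "inj_on al J" using injal J inj_on_subset by blast
  have u2: "a = (\<Sum>j\<in>J. u (al j) *\<^sub>R al j)"
    unfolding u by (rule sum.reindex[OF injJ, unfolded comp_def])
  have "(\<Sum>i\<in>I. (if i \<in> J then u (al i) *\<^sub>R al i else 0)) = (\<Sum>j\<in>J. u (al j) *\<^sub>R al j)"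
    using J finI by (simp add: sum.If_cases Int_absorb1)
  then have "(\<Sum>i\<in>I. (of_int (c i) - (if i \<in> J then u (al i) else 0)) *\<^sub>R al i) = 0"
    using c(2) u2 by (simp add: scaleR_diff_left sum_subtractf if_distrib[of "\<lambda>r. r *\<^sub>R _"] cong: if_cong)
  then have z: "\<forall>i\<in>I - J. c i = 0"
    using coef_zero[of "\<lambda>i. of_int (c i) - (if i \<in> J then u (al i) else 0)"] by force
  have "a = (\<Sum>j\<in>J. of_int (c j) *\<^sub>R al j)"
    unfolding c(2) using z J finI by (intro sum.mono_neutral_right) auto
  then show ?thesis using c(1) J by blast
qed

lemma nc_image:
  assumes J: "J \<subseteq> I" and f: "linear f" and a: "a \<in> PJ J"
    and fj: "\<And>j. j \<in> J \<Longrightarrow> nonneg_comb I al (f (al j))"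
  shows "nonneg_comb I al (f a)"
proof -
  obtain c where c: "\<forall>j\<in>J. c j \<ge> (0::int)" "a = (\<Sum>j\<in>J. of_int (c j) *\<^sub>R al j)"
    using PJ_comb[OF J a] by blast
  have finJ: "finite J" using finI J finite_subset by blast
  have "f a = (\<Sum>j\<in>J. of_int (c j) *\<^sub>R f (al j))"
    unfolding c(2) by (simp add: linear_sum[OF f] linear_scale[OF f])
  then show ?thesis using nc_sum[OF finJ, of "\<lambda>j. f (al j)" c] fj c(1) by simp
qed

lemma PJ_neg:
  assumes J: "J \<subseteq> I" and w: "w \<in> weyl I al" and m: "\<forall>j\<in>J. - w (al j) \<in> P" and a: "a \<in> PJ J"
  shows "- w a \<in> P"
proof -
  have o: "orth w" using weyl_orth[OF w] .
  have lin: "linear (\<lambda>x. - w x)" using linear_compose_neg[OF orth_linear[OF o]] .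
  have "nonneg_comb I al (- w a)"
    using nc_image[OF J lin a] m P_nc by blast
  moreover have "- w a \<in> R" using neg_R weyl_R[OF order_refl w] a by (auto simp: PJ_def P_R)
  ultimately show ?thesis by (simp add: pos_roots_def)
qed

lemma PJ_pos:
  assumes J: "J \<subseteq> I" and w: "w \<in> weyl I al" and m: "\<forall>j\<in>J. w (al j) \<in> P" and a: "a \<in> PJ J"
  shows "w a \<in> P"
proof -
  have o: "orth w" using weyl_orth[OF w] .
  have "nonneg_comb I al (w a)"
    using nc_image[OF J orth_linear[OF o] a] m P_nc by blast
  moreover have "w a \<in> R" using weyl_R[OF order_refl w] a by (auto simp: PJ_def P_R)
  ultimately show ?thesis by (simp add: pos_roots_def)
qed

definition maxc :: "'i set \<Rightarrow> ('a \<Rightarrow> 'a) \<Rightarrow> bool" where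
  "maxc J w \<longleftrightarrow> w \<in> weyl J al \<and> (\<forall>j\<in>J. - w (al j) \<in> P)"

lemma maxc_N:
  assumes J: "J \<subseteq> I" and m: "maxc J w" shows "Nset w = PJ J"
proof
  have wJ: "w \<in> weyl J al" and wI: "w \<in> weyl I al" using m J weyl_mono by (auto simp: maxc_def)
  show "PJ J \<subseteq> Nset w" using PJ_neg[OF J wI] m by (auto simp: maxc_def Nset_def PJ_def)
  show "Nset w \<subseteq> PJ J"
  proof
    fix a assume a: "a \<in> Nset w"
    show "a \<in> PJ J"
    proof (rule ccontr)
      assume "a \<notin> PJ J"
      then have "w a \<in> P" using nonJ_pos[OF J wJ] a by (auto simp: Nset_def PJ_def)
      then show False using a P_not_neg by (auto simp: Nset_def)
    qed
  qed
qed

lemma maxc_surj: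
  assumes J: "J \<subseteq> I" and m: "maxc J w" and b: "b \<in> PJ J"
  shows "\<exists>d\<in>PJ J. w d = - b"
proof -
  have wJ: "w \<in> weyl J al" and wI: "w \<in> weyl I al" using m J weyl_mono by (auto simp: maxc_def)
  have o: "orth w" using weyl_orth[OF wJ] .
  have sub: "w ` PJ J \<subseteq> uminus ` PJ J"
  proof
    fix x assume "x \<in> w ` PJ J"
    then obtain d where d: "d \<in> PJ J" "x = w d" by auto
    have "- w d \<in> P" using PJ_neg[OF J wI] m d(1) by (auto simp: maxc_def)
    moreover have "- w d \<in> span (al ` J)" using d(1) span_weyl_iff[OF wJ] span_neg by (fastforce simp: PJ_def)
    ultimately show "x \<in> uminus ` PJ J" using d(2) by (auto simp: PJ_def intro!: image_eqI[of _ _ "- w d"])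
  qed
  have inj: "inj_on w (PJ J)" using orth_inj[OF o] by (auto intro: inj_onI)
  have "card (uminus ` PJ J) = card (PJ J)" by (rule card_image) (auto intro: inj_onI)
  also have "\<dots> = card (w ` PJ J)" using card_image[OF inj] by simp
  finally have "w ` PJ J = uminus ` PJ J"
    using card_seteq[OF _ sub] finPJ by simp
  then have "- b \<in> w ` PJ J" using b by auto
  then show ?thesis by auto
qed

lemma maxc_unique:
  assumes J: "J \<subseteq> I" and m: "maxc J w" and m': "maxc J w'" shows "w = w'"
proof -
  have wJ: "w \<in> weyl J al" and w'J: "w' \<in> weyl J al" using m m' by (auto simp: maxc_def)
  obtain v where v: "v \<in> weyl J al" "\<forall>x. v (w x) = x \<and> w (v x) = x" using weyl_inv[OF wJ] by blast
  have x: "v \<circ> w' \<in> weyl I al" using weyl_comp[OF v(1) w'J] weyl_mono[OF J] by blast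
  have "Nset (v \<circ> w') = {}"
  proof (rule ccontr)
    assume "Nset (v \<circ> w') \<noteq> {}"
    then obtain a where a: "a \<in> P" "- v (w' a) \<in> P" by (auto simp: Nset_def)
    have "v (w' a) \<in> P"
    proof (cases "a \<in> span (al ` J)")
      case True
      then have aPJ: "a \<in> PJ J" using a by (simp add: PJ_def)
      then have "- w' a \<in> PJ J" using maxc_N[OF J m'] span_weyl_iff[OF w'J] span_neg True
        by (force simp: Nset_def PJ_def)
      then obtain d where d: "d \<in> PJ J" "w d = - (- w' a)" using maxc_surj[OF J m] by blast
      then have "v (w' a) = d" using v(2) by (metis minus_minus)
      then show ?thesis using d(1) by (simp add: PJ_def)
    next
      case False
      have "w' a \<in> P" using nonJ_pos[OF J w'J a(1) False] .
      moreover have "w' a \<notin> span (al ` J)" using False span_weyl_iff[OF w'J] by simp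
      ultimately show ?thesis using nonJ_pos[OF J v(1)] by blast
    qed
    then show False using a(2) P_not_neg by blast
  qed
  then have "v \<circ> w' = id" using N_empty_id[OF x] by simp
  then show "w = w'"
    by (metis comp_apply id_apply v(2) ext)
qed

lemma maxc_exists:
  assumes J: "J \<subseteq> I"
  shows "\<exists>w. w \<in> weyl J al \<and> (\<forall>x\<in>weyl J al. wlen J al x \<le> wlen J al w)"
proof -
  have idW: "id \<in> weyl J al" using weyl_wprod[of "[]" J] by simp
  have "wlen J al ` weyl J al \<subseteq> {..card P}"
  proof
    fix n assume "n \<in> wlen J al ` weyl J al"
    then obtain w where w: "w \<in> weyl J al" "n = wlen J al w" by auto
    have "Nset w \<subseteq> P" by (auto simp: Nset_def)
    then have "card (Nset w) \<le> card P" using finP card_mono by blast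
    then show "n \<in> {..card P}" using wlen_card[OF J w(1)] w(2) by simp
  qed
  then have fin: "finite (wlen J al ` weyl J al)" using finite_subset by blast
  have ne: "wlen J al ` weyl J al \<noteq> {}" using idW by blast
  obtain w where w: "w \<in> weyl J al" "wlen J al w = Max (wlen J al ` weyl J al)"
    using Max_in[OF fin ne] by auto
  show ?thesis using w Max_ge[OF fin] by (intro exI[of _ w]) auto
qed

lemma max_maxc:
  assumes J: "J \<subseteq> I" and w: "w \<in> weyl J al" and mx: "\<forall>x\<in>weyl J al. wlen J al x \<le> wlen J al w"
  shows "maxc J w"
  unfolding maxc_def
proof (intro conjI ballI w)
  fix j assume j: "j \<in> J"
  show "- w (al j) \<in> P"
  proof (rule ccontr)
    assume "- w (al j) \<notin> P"
    moreover have "w (al j) \<in> R" using weyl_R[OF J w alR] j J by auto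
    ultimately have p: "w (al j) \<in> P" using R_cases by blast
    have "card (Nset (w \<circ> s j)) = Suc (card (Nset w))"
      using N_step(2)[OF weyl_orth[OF w] _ p] j J by auto
    moreover have "w \<circ> s j \<in> weyl J al" using weyl_refl[OF j w] .
    ultimately have "wlen J al (w \<circ> s j) = Suc (wlen J al w)"
      using wlen_card[OF J] w by simp
    then show False using mx weyl_refl[OF j w] by fastforce
  qed
qed

lemma longest_maxc: "J \<subseteq> I \<Longrightarrow> maxc J (longest J al)"
proof -
  assume J: "J \<subseteq> I"
  obtain w where w: "w \<in> weyl J al" "\<forall>x\<in>weyl J al. wlen J al x \<le> wlen J al w"
    using maxc_exists[OF J] by blast
  have "longest J al = w" unfolding longest_def
  proof (rule the_equality)
    show "w \<in> weyl J al \<and> (\<forall>x\<in>weyl J al. wlen J al x \<le> wlen J al w)" using w by blast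
  next
    fix w' assume "w' \<in> weyl J al \<and> (\<forall>x\<in>weyl J al. wlen J al x \<le> wlen J al w')"
    then show "w' = w" using maxc_unique[OF J] max_maxc[OF J] w by blast
  qed
  then show ?thesis using max_maxc[OF J w] by simp
qed

lemma maxc_invol:
  assumes J: "J \<subseteq> I" and m: "maxc J w" shows "w (w x) = x"
proof -
  have wJ: "w \<in> weyl J al" using m by (simp add: maxc_def)
  have x: "w \<circ> w \<in> weyl I al" using weyl_comp[OF wJ wJ] weyl_mono[OF J] by blast
  have "Nset (w \<circ> w) = {}"
  proof (rule ccontr)
    assume "Nset (w \<circ> w) \<noteq> {}"
    then obtain a where a: "a \<in> P" "- w (w a) \<in> P" by (auto simp: Nset_def)
    have "w (w a) \<in> P"
    proof (cases "a \<in> span (al ` J)")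
      case True
      then have "- w a \<in> PJ J" using maxc_N[OF J m] span_weyl_iff[OF wJ] span_neg a(1)
        by (force simp: Nset_def PJ_def)
      then have "- w (- w a) \<in> P" using maxc_N[OF J m] by (auto simp: Nset_def)
      then show ?thesis using orth_neg[OF weyl_orth[OF wJ]] by simp
    next
      case False
      have "w a \<in> P" using nonJ_pos[OF J wJ a(1) False] .
      moreover have "w a \<notin> span (al ` J)" using False span_weyl_iff[OF wJ] by simp
      ultimately show ?thesis using nonJ_pos[OF J wJ] by blast
    qed
    then show False using a(2) P_not_neg by blast
  qed
  then have "w \<circ> w = id" using N_empty_id[OF x] by simp
  then show ?thesis by (metis comp_apply id_apply)
qed

end



context RS begin

lemma sum_span: "(\<Sum>i\<in>J. x i *\<^sub>R al i) \<in> span (al ` J)"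
  by (rule span_sum, rule span_scale, rule span_base) auto

lemma PJ_I: "PJ I = P"
proof -
  have "a \<in> span (al ` I)" if a: "a \<in> P" for a
  proof -
    obtain c where "a = (\<Sum>i\<in>I. of_int (c i) *\<^sub>R al i)" using P_nc[OF a] unfolding nonneg_comb_def by blast
    then show ?thesis using sum_span by simp
  qed
  then show ?thesis by (auto simp: PJ_def)
qed

lemma w0_maxc: "maxc I (longest I al)" using longest_maxc by simp
lemma w0_W: "longest I al \<in> weyl I al" using w0_maxc by (simp add: maxc_def)
lemma w0_N: "Nset (longest I al) = P" using maxc_N[OF order_refl w0_maxc] PJ_I by simp
lemma w0_neg: "a \<in> P \<Longrightarrow> - longest I al a \<in> P" using w0_N by (auto simp: Nset_def)
lemma w0_invol: "longest I al (longest I al x) = x" using maxc_invol[OF order_refl w0_maxc] .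
lemma w0_orth: "orth (longest I al)" using weyl_orth[OF w0_W] .

lemma weyl_weights: "set ws \<subseteq> I \<Longrightarrow> x \<in> weights I al \<Longrightarrow> wprod al ws x \<in> weights I al"
proof (induction ws)
  case Nil then show ?case by simp
next
  case (Cons j ws)
  then have j: "j \<in> I" and y: "wprod al ws x \<in> weights I al" by auto
  let ?y = "wprod al ws x"
  have "refl (al j) ?y \<bullet> coroot (al i) \<in> \<int>" if i: "i \<in> I" for i
  proof -
    have "refl (al j) ?y \<bullet> coroot (al i) = ?y \<bullet> coroot (al i) - (?y \<bullet> coroot (al j)) * (al j \<bullet> coroot (al i))"
      by (simp add: refl_def inner_diff_left)
    moreover have "?y \<bullet> coroot (al i) \<in> \<int>" "?y \<bullet> coroot (al j) \<in> \<int>" using y i j by (auto simp: weights_def)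
    moreover have "al j \<bullet> coroot (al i) \<in> \<int>" using integral alR i j by blast
    ultimately show ?thesis by (simp add: Ints_diff Ints_mult)
  qed
  then show ?case by (simp add: weights_def)
qed

end

locale RSL = RS +
  fixes lam :: 'a
  assumes dom: "lam \<in> dominant I al"
begin

definition "S = stab_set I al lam"
abbreviation "w0 \<equiv> longest I al"
abbreviation "w0S \<equiv> longest S al"
abbreviation "lamm \<equiv> longest I al lam"

lemma S_I: "S \<subseteq> I" by (auto simp: S_def stab_set_def)

lemma lam_al_ge: "i \<in> I \<Longrightarrow> lam \<bullet> al i \<ge> 0"
proof -
  assume i: "i \<in> I"
  have "lam \<bullet> coroot (al i) \<ge> 0" using dom i by (auto simp: dominant_def)
  moreover have "al i \<bullet> al i > 0" using al_nz[OF i] by simp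
  ultimately show ?thesis by (simp add: coroot_def zero_le_divide_iff)
qed

lemma lam_al_gt: "i \<in> I \<Longrightarrow> i \<notin> S \<Longrightarrow> lam \<bullet> al i > 0"
proof -
  assume i: "i \<in> I" "i \<notin> S"
  have "lam \<bullet> coroot (al i) \<noteq> 0" using i by (auto simp: S_def stab_set_def)
  then have "lam \<bullet> al i \<noteq> 0" by (simp add: coroot_def)
  then show ?thesis using lam_al_ge[OF i(1)] by simp
qed

lemma lam_al_S: "i \<in> S \<Longrightarrow> lam \<bullet> al i = 0"
  by (auto simp: S_def stab_set_def coroot_def)

lemma lam_span: "a \<in> span (al ` S) \<Longrightarrow> lam \<bullet> a = 0"
  using orthogonal_to_span[of a "al ` S" lam] lam_al_S by (auto simp: orthogonal_def)

lemma lam_pos: "a \<in> P \<Longrightarrow> a \<notin> span (al ` S) \<Longrightarrow> lam \<bullet> a > 0"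
proof -
  assume a: "a \<in> P" "a \<notin> span (al ` S)"
  obtain c where c: "\<forall>i\<in>I. c i \<ge> 0" "a = (\<Sum>i\<in>I. of_int (c i) *\<^sub>R al i)"
    using a by (auto simp: pos_roots_def nonneg_comb_def)
  have "\<exists>i\<in>I - S. c i \<noteq> 0"
  proof (rule ccontr)
    assume "\<not> ?thesis"
    then have "a = (\<Sum>i\<in>S. of_int (c i) *\<^sub>R al i)"
      unfolding c(2) using S_I finI by (intro sum.mono_neutral_right) auto
    then have "a \<in> span (al ` S)" using sum_span by simp
    then show False using a(2) by simp
  qed
  then obtain i where i: "i \<in> I" "i \<notin> S" "c i > 0" using c(1) by force
  have "lam \<bullet> a = (\<Sum>i\<in>I. of_int (c i) * (lam \<bullet> al i))" by (simp add: c(2) inner_sum_right)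
  also have "\<dots> > 0"
    using i lam_al_gt[OF i(1,2)] c(1) lam_al_ge finI
    by (intro sum_pos2[where i=i]) auto
  finally show ?thesis .
qed

lemma coroot_pos_iff: "lam \<bullet> coroot a > 0 \<longleftrightarrow> lam \<bullet> a > 0" if "a \<noteq> 0"
proof -
  have "a \<bullet> a > 0" using that by simp
  then show ?thesis by (auto simp: coroot_def zero_less_divide_iff) (smt (verit) inner_ge_zero)
qed

lemma coroot_zero_iff': "lam \<bullet> coroot a = 0 \<longleftrightarrow> lam \<bullet> a = 0"
  by (cases "a = 0") (simp_all add: coroot_def)

lemma refl_S_lam: "j \<in> S \<Longrightarrow> s j lam = lam"
  by (simp add: refl_def S_def stab_set_def)

lemma lamm_P_le: "c \<in> P \<Longrightarrow> lamm \<bullet> c \<le> 0"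
proof -
  assume c: "c \<in> P"
  have "lamm \<bullet> c = lamm \<bullet> w0 (w0 c)" by (simp add: w0_invol)
  also have "\<dots> = lam \<bullet> w0 c" by (simp add: orth_inner[OF w0_orth])
  also have "\<dots> = - (lam \<bullet> (- w0 c))" by simp
  also have "\<dots> \<le> 0" using lam_span lam_pos w0_neg[OF c] by (smt (verit))
  finally show ?thesis .
qed

lemma lamm_coroot: "lamm \<bullet> coroot a = lam \<bullet> coroot (w0 a)"
proof -
  have "lamm \<bullet> coroot a = lamm \<bullet> w0 (w0 (coroot a))" by (simp add: w0_invol)
  also have "\<dots> = lam \<bullet> w0 (coroot a)" by (simp add: orth_inner[OF w0_orth])
  finally show ?thesis by (simp add: orth_coroot[OF w0_orth])
qed

end


context RSL begin
lemma w0S_maxc: "maxc S w0S" using longest_maxc[OF S_I] .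
lemma w0S_W: "w0S \<in> weyl S al" using w0S_maxc by (simp add: maxc_def)

lemma minimal_prop:
  assumes x: "x \<in> weyl I al" "x lam = lamm"
    and mn: "\<forall>y\<in>weyl I al. y lam = lamm \<longrightarrow> wlen I al x \<le> wlen I al y"
  shows "\<forall>j\<in>S. x (al j) \<in> P"
proof
  fix j assume j: "j \<in> S"
  then have jI: "j \<in> I" using S_I by blast
  show "x (al j) \<in> P"
  proof (rule ccontr)
    assume "x (al j) \<notin> P"
    moreover have "x (al j) \<in> R" using weyl_R[OF order_refl x(1) alR[OF jI]] .
    ultimately have n: "- x (al j) \<in> P" using R_cases by blast
    have c: "card (Nset x) = Suc (card (Nset (x \<circ> s j)))" using N_step_neg[OF weyl_orth[OF x(1)] jI n] .
    have xs: "x \<circ> s j \<in> weyl I al" using weyl_refl[OF jI x(1)] .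
    have "(x \<circ> s j) lam = lamm" using refl_S_lam[OF j] x(2) by simp
    then have "wlen I al x \<le> wlen I al (x \<circ> s j)" using mn xs by blast
    then show False using c wlen_card[OF order_refl x(1)] wlen_card[OF order_refl xs] by simp
  qed
qed

lemma nonS_neg:
  assumes x: "x \<in> weyl I al" "x lam = lamm" and b: "b \<in> P" "b \<notin> span (al ` S)"
  shows "- x b \<in> P"
proof (rule ccontr)
  assume "- x b \<notin> P"
  moreover have "x b \<in> R" using weyl_R[OF order_refl x(1)] b(1) P_R by blast
  ultimately have p: "x b \<in> P" using R_cases by blast
  have "lamm \<bullet> x b = lam \<bullet> b" using x(2) orth_inner[OF weyl_orth[OF x(1)]] by metis
  then have "lamm \<bullet> x b > 0" using lam_pos[OF b] by simp
  then show False using lamm_P_le[OF p] by simp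
qed

lemma minimal_comp:
  assumes x: "x \<in> weyl I al" "x lam = lamm" and pos: "\<forall>j\<in>S. x (al j) \<in> P"
  shows "x \<circ> w0S = w0"
proof -
  have m: "maxc I (x \<circ> w0S)"
    unfolding maxc_def
  proof (intro conjI ballI)
    show "x \<circ> w0S \<in> weyl I al" using weyl_comp[OF x(1) weyl_mono[OF S_I w0S_W]] .
  next
    fix j assume j: "j \<in> I"
    show "- (x \<circ> w0S) (al j) \<in> P"
    proof (cases "j \<in> S")
      case True
      have "al j \<in> PJ S" using True al_P[OF j] by (auto simp: PJ_def span_base)
      then have "al j \<in> Nset w0S" using maxc_N[OF S_I w0S_maxc] by simp
      then have "- w0S (al j) \<in> P" by (simp add: Nset_def)
      moreover have "- w0S (al j) \<in> span (al ` S)"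
        using span_weyl_iff[OF w0S_W] True span_neg span_base by (metis imageI)
      ultimately have "- w0S (al j) \<in> PJ S" by (simp add: PJ_def)
      then have "x (- w0S (al j)) \<in> P" using PJ_pos[OF S_I x(1) pos] by blast
      then show ?thesis using orth_neg[OF weyl_orth[OF x(1)]] by simp
    next
      case False
      have nsp: "al j \<notin> span (al ` S)" using lam_span lam_al_gt[OF j False] by force
      have "w0S (al j) \<in> P" using nonJ_pos[OF S_I w0S_W al_P[OF j] nsp] .
      moreover have "w0S (al j) \<notin> span (al ` S)" using nsp span_weyl_iff[OF w0S_W] by simp
      ultimately show ?thesis using nonS_neg[OF x] by simp
    qed
  qed
  show ?thesis using maxc_unique[OF order_refl m w0_maxc] .
qed

definition "v0 = min_rep I al lam lamm"

lemma v0_props: "v0 \<in> weyl I al \<and> v0 lam = lamm \<and> (\<forall>j\<in>S. v0 (al j) \<in> P) \<and> v0 \<circ> w0S = w0"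
proof -
  let ?C = "\<lambda>x. x \<in> weyl I al \<and> x lam = lamm"
  let ?Q = "\<lambda>x. x \<in> weyl I al \<and> x lam = lamm \<and> (\<forall>y\<in>weyl I al. y lam = lamm \<longrightarrow> wlen I al x \<le> wlen I al y)"
  have ex: "\<exists>n. \<exists>x. ?C x \<and> wlen I al x = n" using w0_W by blast
  define n where "n = (LEAST n. \<exists>x. ?C x \<and> wlen I al x = n)"
  obtain x where x: "?C x" "wlen I al x = n" using LeastI_ex[OF ex] unfolding n_def by blast
  have Qx: "?Q x"
  proof (intro conjI ballI impI)
    fix y assume "y \<in> weyl I al" "y lam = lamm"
    then show "wlen I al x \<le> wlen I al y" unfolding x(2) n_def by (intro Least_le) blast
  qed (use x in auto)
  have uniq: "y = x" if "?Q y" for y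
  proof -
    have "y \<circ> w0S = w0" using minimal_comp[of y] minimal_prop[of y] that by blast
    moreover have "x \<circ> w0S = w0" using minimal_comp[of x] minimal_prop[of x] Qx by blast
    ultimately have e: "y \<circ> w0S = x \<circ> w0S" by simp
    show ?thesis
    proof
      fix z
      have "y (w0S (w0S z)) = x (w0S (w0S z))" using e by (metis comp_apply)
      then show "y z = x z" using maxc_invol[OF S_I w0S_maxc] by simp
    qed
  qed
  have "v0 = x" unfolding v0_def min_rep_def
  proof (rule the_equality)
    show "?Q x" by (rule Qx)
  next
    fix y assume "?Q y" then show "y = x" by (rule uniq)
  qed
  moreover have "\<forall>j\<in>S. x (al j) \<in> P" using Qx minimal_prop[of x] by blast
  moreover have "x \<circ> w0S = w0" using minimal_comp[of x] Qx calculation(2) by blast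
  ultimately show ?thesis using Qx by simp
qed

lemma v0_N: "Nset v0 = P - PJ S"
proof (intro equalityI subsetI)
  have v: "v0 \<in> weyl I al" "v0 lam = lamm" "\<forall>j\<in>S. v0 (al j) \<in> P" using v0_props by auto
  fix a
  show "a \<in> Nset v0 \<Longrightarrow> a \<in> P - PJ S"
    using PJ_pos[OF S_I v(1) v(3)] P_not_neg by (auto simp: Nset_def)
  show "a \<in> P - PJ S \<Longrightarrow> a \<in> Nset v0"
    using nonS_neg[OF v(1,2)] by (auto simp: Nset_def PJ_def)
qed

end



lemma beta_snoc: "k \<in> {1..length ws} \<Longrightarrow> beta_root al (ws @ [j]) k = refl (al j) (beta_root al ws k)"
proof -
  assume k: "k \<in> {1..length ws}"
  then have d: "drop k (ws @ [j]) = drop k ws @ [j]" by simp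
  have "k - 1 < length ws" using k by auto
  then have n: "(ws @ [j]) ! (k - 1) = ws ! (k - 1)" by (simp add: nth_append)
  show ?thesis unfolding beta_root_def d n by simp
qed

lemma beta_drop: "k \<in> {Suc M..length xs} \<Longrightarrow> beta_root al xs k = beta_root al (drop M xs) (k - M)"
proof -
  assume k: "k \<in> {Suc M..length xs}"
  have d: "drop (k - M) (drop M xs) = drop k xs" using k by simp
  have n: "drop M xs ! (k - M - 1) = xs ! (k - 1)" using k by (simp add: nth_drop)
  show ?thesis unfolding beta_root_def d n ..
qed

lemma beta_last: "beta_root al (ws @ [j]) (Suc (length ws)) = al j"
  by (simp add: beta_root_def)

context RS begin

lemma betas_N:
  "set ws \<subseteq> I \<Longrightarrow> card (Nset (wprod al ws)) = length ws \<Longrightarrow>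
   beta_root al ws ` {1..length ws} = Nset (wprod al ws)"
proof (induction ws rule: rev_induct)
  case Nil
  have "Nset (\<lambda>a. a) = {}" using P_not_neg by (auto simp: Nset_def)
  then show ?case by simp
next
  case (snoc j ws)
  then have j: "j \<in> I" and ws: "set ws \<subseteq> I" by auto
  let ?w = "wprod al ws"
  have o: "orth ?w" by (rule wprod_orth)
  have le: "card (Nset ?w) \<le> length ws" using card_N_le[OF ws] .
  have "?w (al j) \<in> R" using wprod_R[OF ws alR[OF j]] .
  moreover have "- ?w (al j) \<notin> P"
  proof
    assume "- ?w (al j) \<in> P"
    from N_step_neg[OF o j this] have "card (Nset ?w) = Suc (card (Nset (wprod al (ws @ [j]))))"
      by (simp add: wprod_snoc)
    then show False using snoc.prems(2) le by simp
  qed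
  ultimately have p: "?w (al j) \<in> P" using R_cases by blast
  have eq: "Nset (wprod al (ws @ [j])) = s j ` Nset ?w \<union> {al j}"
    using N_step(1)[OF o j p] by (simp add: wprod_snoc)
  have "card (Nset (wprod al (ws @ [j]))) = Suc (card (Nset ?w))"
    using N_step(2)[OF o j p] by (simp add: wprod_snoc)
  then have c: "card (Nset ?w) = length ws" using snoc.prems(2) by simp
  have IH: "beta_root al ws ` {1..length ws} = Nset ?w" using snoc.IH[OF ws c] .
  have sp: "{1..length (ws @ [j])} = {1..length ws} \<union> {Suc (length ws)}" by auto
  have "beta_root al (ws @ [j]) ` {1..length ws} = (\<lambda>k. s j (beta_root al ws k)) ` {1..length ws}"
    by (intro image_cong refl beta_snoc) simp
  then have "beta_root al (ws @ [j]) ` {1..length ws} = s j ` beta_root al ws ` {1..length ws}"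
    by (simp add: image_image)
  then show ?case unfolding sp eq using IH by (simp add: image_Un beta_last[of al ws j])
qed

lemma betas_inj:
  assumes "set ws \<subseteq> I" "card (Nset (wprod al ws)) = length ws"
  shows "inj_on (beta_root al ws) {1..length ws}"
  by (rule eq_card_imp_inj_on) (use betas_N[OF assms] assms(2) in simp_all)

end

locale RSLI = RSL +
  fixes "is" and M :: nat
  assumes M_le: "M \<le> length is"
    and red_v: "reduced_expr I al (take M is) (min_rep I al lam (longest I al lam))"
    and red_S: "reduced_expr I al (drop M is) (longest (stab_set I al lam) al)"
begin

abbreviation "N \<equiv> length is"
abbreviation "B \<equiv> beta_root al is"

lemma take_props: "set (take M is) \<subseteq> I" "wprod al (take M is) = v0" "M = card (P - PJ S)"
proof -
  show t: "set (take M is) \<subseteq> I" and w: "wprod al (take M is) = v0"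
    using red_v by (auto simp: reduced_expr_def v0_def)
  have "M = wlen I al v0" using red_v M_le by (auto simp: reduced_expr_def v0_def min_def split: if_splits)
  also have "\<dots> = card (Nset v0)" using wlen_card[OF order_refl] v0_props by blast
  finally show "M = card (P - PJ S)" using v0_N by simp
qed

lemma drop_props: "set (drop M is) \<subseteq> I" "wprod al (drop M is) = w0S" "length (drop M is) = card (PJ S)"
    "card (Nset (wprod al (drop M is))) = length (drop M is)"
proof -
  show t: "set (drop M is) \<subseteq> I" and w: "wprod al (drop M is) = w0S"
    using red_S by (auto simp: reduced_expr_def S_def)
  have wI: "w0S \<in> weyl I al" using weyl_mono[OF S_I w0S_W] .
  have "length (drop M is) = wlen I al w0S" using red_S by (simp add: reduced_expr_def S_def)
  also have "\<dots> = card (Nset w0S)" using wlen_card[OF order_refl wI] .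
  finally have l: "length (drop M is) = card (Nset w0S)" .
  then show "length (drop M is) = card (PJ S)" using maxc_N[OF S_I w0S_maxc] by simp
  show "card (Nset (wprod al (drop M is))) = length (drop M is)" using l w by simp
qed

lemma is_props: "set is \<subseteq> I" "wprod al is = w0" "N = card P" "card (Nset (wprod al is)) = N"
proof -
  have sp: "is = take M is @ drop M is" by simp
  show "set is \<subseteq> I" using take_props(1) drop_props(1) sp by (metis set_append Un_subset_iff)
  show w: "wprod al is = w0" using v0_props take_props(2) drop_props(2) sp by (metis wprod_append)
  have "N = M + length (drop M is)" using M_le by simp
  also have "\<dots> = card (P - PJ S) + card (PJ S)" using take_props(3) drop_props(3) by simp
  also have "\<dots> = card P"
  proof -
    have sub: "PJ S \<subseteq> P" by (auto simp: PJ_def)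
    have "card (PJ S) \<le> card P" using card_mono[OF finP sub] .
    then show ?thesis using card_Diff_subset[OF finPJ sub] by simp
  qed
  finally show n: "N = card P" .
  show "card (Nset (wprod al is)) = N" using w w0_N n by simp
qed

lemma B_img: "B ` {1..N} = P" using betas_N[OF is_props(1,4)] is_props(2) w0_N by simp
lemma B_inj: "inj_on B {1..N}" using betas_inj[OF is_props(1,4)] .

lemma B_high: "B ` {Suc M..N} = PJ S"
proof -
  have "B ` {Suc M..N} = (\<lambda>k. beta_root al (drop M is) (k - M)) ` {Suc M..N}"
    by (intro image_cong refl beta_drop) simp
  also have "\<dots> = beta_root al (drop M is) ` ((\<lambda>k. k - M) ` {Suc M..N})" by (simp add: image_image)
  also have "(\<lambda>k. k - M) ` {Suc M..N} = {1..length (drop M is)}"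
  proof (intro equalityI subsetI)
    fix x assume "x \<in> {1..length (drop M is)}"
    then show "x \<in> (\<lambda>k. k - M) ` {Suc M..N}" by (intro image_eqI[of _ _ "x + M"]) auto
  qed auto
  also have "beta_root al (drop M is) ` {1..length (drop M is)} = Nset w0S"
    using betas_N[OF drop_props(1,4)] drop_props(2) by simp
  finally show ?thesis using maxc_N[OF S_I w0S_maxc] by simp
qed

lemma B_low: "B ` {1..M} = P - PJ S"
proof -
  have un: "{1..N} = {1..M} \<union> {Suc M..N}" using M_le by auto
  have "B ` {1..M} \<inter> B ` {Suc M..N} = {}"
    using inj_on_image_Int[OF B_inj, of "{1..M}" "{Suc M..N}"] M_le by auto
  moreover have "B ` {1..M} \<union> B ` {Suc M..N} = P" using B_img un by (simp add: image_Un)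
  ultimately show ?thesis using B_high by blast
qed

lemma B_distinct: "j \<in> {1..N} \<Longrightarrow> k \<in> {1..N} \<Longrightarrow> B j = B k \<Longrightarrow> j = k"
  using B_inj by (auto dest: inj_onD)

end




lemma strict_mono_id:
  fixes f :: "nat \<Rightarrow> nat"
  assumes r: "\<And>k. k \<in> {1..M} \<Longrightarrow> f k \<in> {1..M}"
    and m: "\<And>i j. 1 \<le> i \<Longrightarrow> i < j \<Longrightarrow> j \<le> M \<Longrightarrow> f i < f j"
  shows "k \<in> {1..M} \<Longrightarrow> f k = k"
proof -
  have lo: "k \<in> {1..M} \<Longrightarrow> k \<le> f k" for k
  proof (induction k)
    case 0 then show ?case by simp
  next
    case (Suc k)
    show ?case
    proof (cases "k = 0")
      case True then show ?thesis using r Suc.prems by force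
    next
      case False
      then have "k \<le> f k" using Suc by simp
      moreover have "f k < f (Suc k)" using m[of k "Suc k"] False Suc.prems by simp
      ultimately show ?thesis by simp
    qed
  qed
  have hi: "\<forall>k. k \<in> {1..M} \<longrightarrow> M - k = d \<longrightarrow> f k + d \<le> M" for d
  proof (induction d)
    case 0 then show ?case using r by fastforce
  next
    case (Suc d)
    show ?case
    proof (intro allI impI)
      fix k assume k: "k \<in> {1..M}" "M - k = Suc d"
      then have "Suc k \<in> {1..M}" "M - Suc k = d" by auto
      then have "f (Suc k) + d \<le> M" using Suc.IH by blast
      moreover have "f k < f (Suc k)" using m[of k "Suc k"] k by simp
      ultimately show "f k + Suc d \<le> M" by simp
    qed
  qed
  assume k: "k \<in> {1..M}"
  show "f k = k" using lo[OF k] hi[of "M - k"] k by force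
qed

context RSLI begin

lemma lam_weights: "lam \<in> weights I al" using dom by (simp add: dominant_def)

lemma lam_coroot_int: "a \<in> R \<Longrightarrow> lam \<bullet> coroot a \<in> \<int>"
proof -
  have pos: "lam \<bullet> coroot a \<in> \<int>" if a: "a \<in> P" for a
  proof -
    obtain k where k: "k \<in> {1..N}" "a = B k" using B_img a by blast
    let ?d = "drop k is"
    let ?i = "is ! (k - 1)"
    have iI: "?i \<in> I" using is_props(1) k(1) by (auto intro: nth_mem[THEN subsetD[rotated]] simp: subset_iff)
    have dI: "set (rev ?d) \<subseteq> I" using is_props(1) by (auto dest: in_set_dropD)
    let ?u = "wprod al (rev ?d)"
    let ?y = "wprod al ?d lam"
    have ab: "a = ?u (al ?i)" using k(2) by (simp add: beta_root_def)
    have yl: "?u ?y = lam" using wprod_inv_rev[of al "rev ?d" lam] by simp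
    have "lam \<bullet> coroot a = ?u ?y \<bullet> ?u (coroot (al ?i))"
      using ab yl by (simp add: orth_coroot[OF wprod_orth])
    also have "\<dots> = ?y \<bullet> coroot (al ?i)" by (rule orth_inner[OF wprod_orth])
    finally show ?thesis using weyl_weights[OF _ lam_weights, of ?d] is_props(1) iI
      by (auto simp: weights_def dest: in_set_dropD)
  qed
  assume a: "a \<in> R"
  then consider "a \<in> P" | "- a \<in> P" using R_cases by blast
  then show ?thesis
  proof cases
    case 1 then show ?thesis using pos by blast
  next
    case 2
    have "lam \<bullet> coroot a = - (lam \<bullet> coroot (- a))" by simp
    then show ?thesis using pos[OF 2] by (metis Ints_minus)
  qed
qed

lemma lamm_coroot_int: "a \<in> R \<Longrightarrow> lamm \<bullet> coroot a \<in> \<int>"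
  using lamm_coroot lam_coroot_int weyl_R[OF order_refl w0_W] by metis

definition "Inv = {b \<in> aff_pos R I al. ext_act id lamm b \<in> aff_neg R I al}"
definition "ph b = fst (Phi lamm w0 b)"
definition "A = {a \<in> R. - a \<in> P \<and> lamm \<bullet> coroot a > 0}"
definition "zf a = (coroot a, lamm \<bullet> coroot a)"

lemma Inv_analysis:
  assumes b: "b \<in> Inv"
  shows "ph b \<ge> 0" "ph b = 0 \<Longrightarrow> \<exists>a\<in>A. b = zf a"
proof -
  obtain a n where an: "b = (coroot a, of_int n)" "a \<in> R" "n > 0 \<or> (n = 0 \<and> a \<in> P)"
    using b by (auto simp: Inv_def aff_pos_def)
  define m where "m = lamm \<bullet> coroot a"
  have "ext_act id lamm b = (coroot a, of_int n - m)" by (simp add: ext_act_def an(1) m_def)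
  then have "(coroot a, of_int n - m) \<in> aff_neg R I al" using b by (simp add: Inv_def)
  then obtain a' n' where an': "coroot a = - coroot a'" "of_int n - m = - of_int n'" "a' \<in> R"
    "n' > 0 \<or> (n' = 0 \<and> a' \<in> P)"
    by (auto simp: aff_neg_def aff_pos_def)
  have aa: "a' = - a" using an'(1) by (metis coroot_coroot coroot_neg minus_minus)
  have mm: "m = of_int n + of_int n'" using an'(2) by simp
  have phb: "ph b = of_int n' / m" by (simp add: ph_def Phi_def an(1) m_def[symmetric] mm)
  have n0: "n \<ge> 0" "n' \<ge> 0" using an(3) an'(4) by auto
  then show "ph b \<ge> 0" using phb mm by simp
  assume z: "ph b = 0"
  have "n' = 0"
  proof (rule ccontr)
    assume "n' \<noteq> 0"
    then have "m = 0" using z phb by simp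
    then have "n = 0" "n' = 0" using mm n0 by linarith+
    then show False using an(3) an'(4) aa P_not_neg by auto
  qed
  then have "- a \<in> P" "n > 0" using an(3) an'(4) aa P_not_neg by auto
  then have "a \<in> A" "b = zf a" using an(1,2) mm \<open>n' = 0\<close> by (auto simp: A_def zf_def m_def)
  then show "\<exists>a\<in>A. b = zf a" by blast
qed

lemma zf_Inv: "a \<in> A \<Longrightarrow> zf a \<in> Inv \<and> ph (zf a) = 0"
proof -
  assume a: "a \<in> A"
  then have aR: "a \<in> R" and na: "- a \<in> P" and mp: "lamm \<bullet> coroot a > 0" by (auto simp: A_def)
  obtain n where n: "lamm \<bullet> coroot a = of_int n" using lamm_coroot_int[OF aR] Ints_cases by metis
  have np: "n > 0" using mp n by simp
  have pos: "zf a \<in> aff_pos R I al" unfolding aff_pos_def zf_def n using aR np by blast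
  have "(coroot (- a), of_int 0) \<in> aff_pos R I al" unfolding aff_pos_def using neg_R[OF aR] na by blast
  then have "(- coroot (- a), - of_int 0) \<in> aff_neg R I al" unfolding aff_neg_def by blast
  moreover have "ext_act id lamm (zf a) = (- coroot (- a), - of_int 0)" by (simp add: ext_act_def zf_def)
  ultimately have "zf a \<in> Inv" using pos by (simp add: Inv_def)
  moreover have "ph (zf a) = 0" by (simp add: ph_def Phi_def zf_def)
  ultimately show ?thesis by blast
qed

lemma zf_snd: "snd (Phi lamm w0 (zf a)) = w0 a"
  by (simp add: Phi_def zf_def orth_coroot[OF w0_orth])

lemma w0_A: "w0 ` A = P - PJ S"
proof (intro equalityI subsetI)
  fix c assume "c \<in> w0 ` A"
  then obtain a where a: "a \<in> A" "c = w0 a" by auto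
  have "- w0 (- a) \<in> P" using w0_neg a(1) by (auto simp: A_def)
  then have cP: "c \<in> P" using a(2) orth_neg[OF w0_orth] by simp
  have "lam \<bullet> coroot c > 0" using a lamm_coroot by (simp add: A_def)
  then have "c \<notin> span (al ` S)" using lam_span coroot_zero_iff' by force
  then show "c \<in> P - PJ S" using cP by (simp add: PJ_def)
next
  fix c assume c: "c \<in> P - PJ S"
  then have cP: "c \<in> P" and cn: "c \<notin> span (al ` S)" by (auto simp: PJ_def)
  have "w0 c \<in> R" using weyl_R[OF order_refl w0_W] P_R cP by blast
  moreover have "- w0 c \<in> P" using w0_neg cP by blast
  moreover have "lamm \<bullet> coroot (w0 c) > 0"
    using lamm_coroot w0_invol lam_pos[OF cP cn] coroot_pos_iff zero_notin P_R cP by metis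
  ultimately have "w0 c \<in> A" by (simp add: A_def)
  then show "c \<in> w0 ` A" using w0_invol by (metis image_eqI)
qed

lemma card_Z: "card {b \<in> Inv. ph b = 0} = M"
proof -
  have Z: "{b \<in> Inv. ph b = 0} = zf ` A" using Inv_analysis zf_Inv by blast
  have i1: "inj_on zf A" by (rule inj_onI) (auto simp: zf_def dest: coroot_inj)
  have i2: "inj_on w0 A" by (rule inj_onI) (auto dest: orth_inj[OF w0_orth])
  have "card (zf ` A) = card A" using card_image[OF i1] .
  also have "\<dots> = card (w0 ` A)" using card_image[OF i2] by simp
  finally show ?thesis using Z w0_A take_props(3) by simp
qed

lemma final:
  fixes T :: "nat \<Rightarrow> 'a \<times> real" and L :: nat
  assumes sorted: "sorted_wrt (prec' al is lamm w0) (map T [1..<L + 1])"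
    and exh: "T ` {1..L} = Inv"
  shows "\<forall>k\<in>{1..M}. w0 (fst (T k)) = coroot (B k)"
proof -
  let ?Q = "prec' al is lamm w0"
  have sw: "?Q (T i) (T j)" if "1 \<le> i" "i < j" "j \<le> L" for i j
  proof -
    have all: "\<forall>i j. i < j \<longrightarrow> j < L \<longrightarrow> ?Q (T (Suc i)) (T (Suc j))"
      using sorted unfolding sorted_wrt_iff_nth_less by (simp del: upt_Suc)
    have "?Q (T (Suc (i - 1))) (T (Suc (j - 1)))" using that all[rule_format, of "i - 1" "j - 1"] by linarith
    then show ?thesis using that by simp
  qed
  have irr: "\<not> ?Q x x" for x
  proof
    assume "?Q x x"
    then obtain j k where jk: "1 \<le> j" "j < k" "k \<le> N" "B j = B k" by (auto simp: prec'_def succ_ord_def)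
    then show False using B_distinct[of j k] by auto
  qed
  have injT: "inj_on T {1..L}"
  proof (rule inj_onI)
    fix i j assume ij: "i \<in> {1..L}" "j \<in> {1..L}" "T i = T j"
    show "i = j"
    proof (rule ccontr)
      assume "i \<noteq> j"
      then consider "i < j" | "j < i" by linarith
      then show False using sw[of i j] sw[of j i] ij irr by cases auto
    qed
  qed
  define Z where "Z = {b \<in> Inv. ph b = 0}"
  define K where "K = {p \<in> {1..L}. T p \<in> Z}"
  have TK: "T ` K = Z"
  proof (intro equalityI subsetI)
    fix z assume "z \<in> Z"
    then have "z \<in> T ` {1..L}" using exh by (simp add: Z_def)
    then obtain p where "p \<in> {1..L}" "z = T p" by blast
    then show "z \<in> T ` K" using \<open>z \<in> Z\<close> by (auto simp: K_def)
  qed (auto simp: K_def)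
  have KL: "K \<subseteq> {1..L}" by (auto simp: K_def)
  have "card (T ` K) = card K" using card_image[OF inj_on_subset[OF injT KL]] .
  then have cK: "card K = M" using TK card_Z by (simp add: Z_def)
  have hML: "M \<le> L" using card_mono[OF _ KL] cK by simp
  have inZ: "T k \<in> Z" if k: "k \<in> {1..M}" for k
  proof (rule ccontr)
    assume nz: "T k \<notin> Z"
    have "\<exists>p\<in>K. p > k"
    proof (rule ccontr)
      assume "\<not> ?thesis"
      then have nk: "\<forall>p\<in>K. p \<le> k" by (simp add: not_less)
      have "K \<subseteq> {1..k - 1}"
      proof
        fix p assume p: "p \<in> K"
        then have "p \<ge> 1" "p \<le> k" "p \<noteq> k" using nk nz by (auto simp: K_def)
        then show "p \<in> {1..k - 1}" by simp
      qed
      then have "card K \<le> k - 1" using card_mono[of "{1..k-1}" K] by simp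
      then show False using cK k by auto
    qed
    then obtain p where p: "p \<in> K" "p > k" by blast
    have "?Q (T k) (T p)" using sw[of k p] p k KL by auto
    then have "ph (T k) \<le> ph (T p)" unfolding prec'_def ph_def by auto
    moreover have "ph (T p) = 0" using p by (simp add: K_def Z_def)
    moreover have "T k \<in> Inv" using exh k hML by auto
    ultimately have "ph (T k) = 0" using Inv_analysis(1)[of "T k"] by linarith
    then show False using nz \<open>T k \<in> Inv\<close> by (simp add: Z_def)
  qed
  have sndB: "snd (Phi lamm w0 (T k)) \<in> B ` {1..M}" if k: "k \<in> {1..M}" for k
  proof -
    have "T k \<in> Inv" "ph (T k) = 0" using inZ[OF k] by (auto simp: Z_def)
    then obtain a where a: "a \<in> A" "T k = zf a" using Inv_analysis(2)[of "T k"] by blast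
    have "snd (Phi lamm w0 (T k)) = w0 a" using a(2) zf_snd by simp
    moreover have "w0 a \<in> w0 ` A" using a(1) by (rule imageI)
    ultimately show ?thesis using w0_A B_low by simp
  qed
  define sg where "sg k = (SOME j. j \<in> {1..M} \<and> B j = snd (Phi lamm w0 (T k)))" for k
  have sg: "sg k \<in> {1..M} \<and> B (sg k) = snd (Phi lamm w0 (T k))" if k: "k \<in> {1..M}" for k
  proof -
    obtain j where "j \<in> {1..M}" "snd (Phi lamm w0 (T k)) = B j" using sndB[OF k] by (rule imageE)
    then have "\<exists>j. j \<in> {1..M} \<and> B j = snd (Phi lamm w0 (T k))" by auto
    then show ?thesis unfolding sg_def by (rule someI_ex)
  qed
  have sgm: "sg i < sg j" if ij: "1 \<le> i" "i < j" "j \<le> M" for i j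
  proof -
    have Qij: "?Q (T i) (T j)" using sw[of i j] ij hML by simp
    have "ph (T i) = 0" "ph (T j) = 0" using inZ ij by (auto simp: Z_def)
    then have "succ_ord al is (snd (Phi lamm w0 (T i))) (snd (Phi lamm w0 (T j)))"
      using Qij unfolding prec'_def ph_def by auto
    then obtain a b where ab: "1 \<le> a" "a < b" "b \<le> N" "B a = snd (Phi lamm w0 (T i))" "B b = snd (Phi lamm w0 (T j))"
      unfolding succ_ord_def by blast
    have si: "sg i \<in> {1..M}" "B (sg i) = B a" using sg[of i] ij ab(4) by auto
    have sj: "sg j \<in> {1..M}" "B (sg j) = B b" using sg[of j] ij ab(5) by auto
    have "sg i = a" using B_distinct[of "sg i" a] si ab M_le by auto
    moreover have "sg j = b" using B_distinct[of "sg j" b] sj ab M_le by auto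
    ultimately show ?thesis using ab by simp
  qed
  have sgid: "sg k = k" if "k \<in> {1..M}" for k
    using strict_mono_id[of M sg k] sg sgm that by blast
  show ?thesis
  proof
    fix k assume k: "k \<in> {1..M}"
    have "B k = coroot (w0 (fst (T k)))" using sg[OF k] sgid[OF k] by (simp add: Phi_def)
    then show "w0 (fst (T k)) = coroot (B k)" by simp
  qed
qed

end


theorem corollary5p6:
  fixes R :: "'a::euclidean_space set" and I :: "'i set" and al :: "'i \<Rightarrow> 'a"
    and lam :: 'a and "is" :: "'i list" and M :: nat
    and u :: "'a \<times> real \<Rightarrow> 'a \<times> real" and ls :: "'i option list"
  assumes rs: "root_system R" and irr: "irreducible_rs R" and base: "is_base R I al"
    and dom: "lam \<in> dominant I al"
    and M_le: "M \<le> length is"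
    and red_v: "reduced_expr I al (take M is)
                  (min_rep I al lam (longest I al lam))"
    and red_S: "reduced_expr I al (drop M is) (longest (stab_set I al lam) al)"
    and u_Om: "u \<in> Omega R I al"
    and ls_I: "set ls \<subseteq> Some ` I \<union> {None}"
    and expr: "ext_act id (longest I al lam) = u \<circ> aprod al (highest_short_root R I al) ls"
    and red_t: "length ls = aff_len R I al (ext_act id (longest I al lam))"
    and sorted: "sorted_wrt (prec' al is (longest I al lam) (longest I al))
                   (map (tbeta al (highest_short_root R I al) ls) [1..<length ls + 1])"
    and exhaust: "tbeta al (highest_short_root R I al) ls ` {1..length ls} =
                   {b \<in> aff_pos R I al. ext_act id (longest I al lam) b \<in> aff_neg R I al}"
  shows "\<forall>k\<in>{1..M}. longest I al (fst (tbeta al (highest_short_root R I al) ls k))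
                     = coroot (beta_root al is k)"
proof -
  interpret RSLI R I al lam "is" M
    by unfold_locales (use rs base dom M_le red_v red_S in auto)
  have ex: "tbeta al (highest_short_root R I al) ls ` {1..length ls} = Inv"
    using exhaust by (simp add: Inv_def)
  show ?thesis using final[OF sorted ex] .
qed

end
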